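(* Let $f\in\mathrm{Rat}_d(\mathbb{C}_v)$, $d\ge 2$, satisfy $|f(x)|>1$ for every $x\in\mathbb{C}_v$ with $|x|>1$. Then for every $\gamma>0$ there is an open subset $W\subseteq\mathrm{Rat}_d(\mathbb{C}_v)$ containing $f$ such that every $g\in W$ satisfies (a) $|g(x)|>1$ for all $x\in\mathbb{C}_v$ with $|x|>1$, and (b) $|g(x)-f(x)|<\gamma$ for all $x\in\mathbb{C}_v$ with $|f(x)|\le1$.
   Context: $\mathbb{C}_v$ is an algebraically closed field of characteristic zero, complete with respect to a nontrivial non-archimedean absolute value. $\mathrm{Rat}_d(\mathbb{C}_v)$ is the set of rational functions of degree exactly $d$ (degree of $F/G$ with $F,G$ coprime polynomials being $\max\{\deg F,\deg G\}$), topologized via the inclusion into $\mathbb{P}^{2d+1}(\mathbb{C}_v)$ sending $f$ to its tuple of $2d+2$ coefficients. *)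

theory Defs
  imports "HOL-Computational_Algebra.Computational_Algebra"
begin

text \<open>abv is a nontrivial non-archimedean absolute value on the field 'a (of
characteristic zero, enforced by the type class), 'a is algebraically closed and
complete with respect to abv.  This models the field C_v.\<close>

definition nonarch_abs :: "('a::field \<Rightarrow> real) \<Rightarrow> bool" where
  "nonarch_abs abv \<longleftrightarrow>
     (\<forall>x. abv x = 0 \<longleftrightarrow> x = 0) \<and>
     (\<forall>x y. abv (x * y) = abv x * abv y) \<and>
     (\<forall>x y. abv (x + y) \<le> max (abv x) (abv y))"

definition nontrivial_abs :: "('a::field \<Rightarrow> real) \<Rightarrow> bool" where
  "nontrivial_abs abv \<longleftrightarrow> (\<exists>x. x \<noteq> 0 \<and> abv x \<noteq> 1)"

definition abs_complete :: "('a::field \<Rightarrow> real) \<Rightarrow> bool" where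
  "abs_complete abv \<longleftrightarrow>
     (\<forall>X :: nat \<Rightarrow> 'a.
        (\<forall>e>0. \<exists>N. \<forall>m\<ge>N. \<forall>n\<ge>N. abv (X m - X n) < e) \<longrightarrow>
        (\<exists>L. \<forall>e>0. \<exists>N. \<forall>n\<ge>N. abv (X n - L) < e))"

definition alg_closed_field :: "'a::field itself \<Rightarrow> bool" where
  "alg_closed_field _ \<longleftrightarrow> (\<forall>p :: 'a poly. degree p > 0 \<longrightarrow> (\<exists>x. poly p x = 0))"

definition Cv_field :: "('a::field_char_0 \<Rightarrow> real) \<Rightarrow> bool" where
  "Cv_field abv \<longleftrightarrow> alg_closed_field TYPE('a) \<and> nonarch_abs abv \<and>
                     nontrivial_abs abv \<and> abs_complete abv"

text \<open>A rational function F/G is represented by its (numerator, denominator) pair.  Its coefficient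
tuple (coeff F 0..d, coeff G 0..d) is a point of C_v^(2d+2) minus 0, and two pairs
represent the same element of Rat_d iff they differ by a nonzero scalar.\<close>

definition is_ratd :: "nat \<Rightarrow> 'a::field poly \<times> 'a poly \<Rightarrow> bool" where
  "is_ratd d FG \<longleftrightarrow> coprime (fst FG) (snd FG) \<and> max (degree (fst FG)) (degree (snd FG)) = d"

text \<open>Open subsets of Rat_d (topology induced from P^(2d+1)), given as
scaling-saturated sets of representing pairs which are open in the coefficient
topology.\<close>

definition ratd_open :: "('a::field \<Rightarrow> real) \<Rightarrow> nat \<Rightarrow> ('a poly \<times> 'a poly) set \<Rightarrow> bool" where
  "ratd_open abv d W \<longleftrightarrow>
     W \<subseteq> {FG. is_ratd d FG} \<and>
     (\<forall>F G c. (F, G) \<in> W \<and> c \<noteq> 0 \<longrightarrow> (smult c F, smult c G) \<in> W) \<and>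
     (\<forall>F G. (F, G) \<in> W \<longrightarrow> (\<exists>e>0. \<forall>F' G'. is_ratd d (F', G') \<and>
         (\<forall>i\<le>d. abv (coeff F' i - coeff F i) < e \<and> abv (coeff G' i - coeff G i) < e)
         \<longrightarrow> (F', G') \<in> W))"

text \<open>|f(x)| > 1 for f = F/G, where a pole (G(x) = 0) counts as |f(x)| = infinity.\<close>

definition rat_abs_gt1 :: "('a::field \<Rightarrow> real) \<Rightarrow> 'a poly \<times> 'a poly \<Rightarrow> 'a \<Rightarrow> bool" where
  "rat_abs_gt1 abv FG x \<longleftrightarrow> poly (snd FG) x = 0 \<or> abv (poly (fst FG) x / poly (snd FG) x) > 1"

end

theory Submission imports Defs begin

lemma bezout_poly:
  fixes P Q :: "'a::field poly"
  assumes cop: "coprime P Q"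
  shows "\<exists>A B. A * P + B * Q = 1"
proof -
  define S where "S = {D. D \<noteq> 0 \<and> (\<exists>A B. D = A * P + B * Q)}"
  have ne: "\<exists>D. D \<in> S"
  proof (cases "P = 0")
    case True
    then have "Q \<noteq> 0" using cop by auto
    then have "Q = 0 * P + 1 * Q" "Q \<noteq> 0" by simp_all
    then show ?thesis unfolding S_def by blast
  next
    case False
    then have "P = 1 * P + 0 * Q" "P \<noteq> 0" by simp_all
    then show ?thesis unfolding S_def by blast
  qed
  define n where "n = (LEAST n. \<exists>D\<in>S. degree D = n)"
  have ex: "\<exists>n. \<exists>D\<in>S. degree D = n" using ne by blast
  obtain D where DS: "D \<in> S" and Dn: "degree D = n"
    using LeastI_ex[OF ex] unfolding n_def by blast
  have Dmin: "degree D \<le> degree D'" if "D' \<in> S" for D'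
  proof -
    have "n \<le> degree D'" unfolding n_def by (rule Least_le) (use that in blast)
    then show ?thesis using Dn by simp
  qed
  from DS obtain A0 B0 where D: "D = A0 * P + B0 * Q" "D \<noteq> 0" unfolding S_def by blast
  have closed: "X mod D = 0" if "X = A1 * P + B1 * Q" for X A1 B1
  proof (rule ccontr)
    assume nz: "X mod D \<noteq> 0"
    have "X mod D = X - (X div D) * D" by (simp add: minus_div_mult_eq_mod)
    also have "\<dots> = (A1 - (X div D) * A0) * P + (B1 - (X div D) * B0) * Q"
      using that D by (simp add: algebra_simps)
    finally have "X mod D \<in> S" using nz unfolding S_def by blast
    then have "degree D \<le> degree (X mod D)" by (rule Dmin)
    moreover have "degree (X mod D) < degree D" using degree_mod_less[OF D(2), of X] nz by simp
    ultimately show False by simp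
  qed
  have "D dvd P" using closed[of P 1 0] by (simp add: mod_eq_0_iff_dvd)
  moreover have "D dvd Q" using closed[of Q 0 1] by (simp add: mod_eq_0_iff_dvd)
  ultimately have "is_unit D" using cop by (auto simp: coprime_def)
  then obtain E where "1 = D * E" by (auto elim: dvdE)
  then have "(E * A0) * P + (E * B0) * Q = 1" using D by (simp add: algebra_simps)
  then show ?thesis by blast
qed

lemma coprime_from_bezout:
  fixes P Q :: "'a::field poly"
  assumes "A * P + B * Q = 1"
  shows "coprime P Q"
proof (rule coprimeI)
  fix c assume "c dvd P" "c dvd Q"
  then have "c dvd A * P + B * Q" by simp
  then show "is_unit c" using assms by simp
qed

lemma is_ratd_smult:
  fixes P Q :: "'a::field poly"
  assumes "is_ratd d (P, Q)" "k \<noteq> 0"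
  shows "is_ratd d (smult k P, smult k Q)"
proof -
  from assms obtain A B where AB: "A * P + B * Q = 1"
    using bezout_poly[of P Q] unfolding is_ratd_def by auto
  have "smult (inverse k) A * smult k P + smult (inverse k) B * smult k Q = 1"
    using AB assms(2) by (simp add: mult_smult_left mult_smult_right smult_add_right[symmetric])
  then have "coprime (smult k P) (smult k Q)" by (rule coprime_from_bezout)
  then show ?thesis using assms unfolding is_ratd_def by simp
qed

lemma poly_sum_le:
  fixes p :: "'a::comm_ring_1 poly"
  assumes "degree p \<le> n"
  shows "poly p x = (\<Sum>i\<le>n. coeff p i * x ^ i)"
proof -
  have "poly p x = (\<Sum>i\<le>degree p. coeff p i * x ^ i)" by (rule poly_altdef)
  also have "\<dots> = (\<Sum>i\<le>n. coeff p i * x ^ i)"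
    by (rule sum.mono_neutral_left) (use assms in \<open>auto, metis coeff_eq_0 mult_zero_left not_le\<close>)
  finally show ?thesis .
qed

locale nabs =
  fixes abv :: "'a::field \<Rightarrow> real"
  assumes na: "nonarch_abs abv" and nn: "\<And>x. abv x \<ge> 0"
begin

lemma abv_eq0: "abv x = 0 \<longleftrightarrow> x = 0" using na unfolding nonarch_abs_def by blast
lemma abv_mult: "abv (x * y) = abv x * abv y" using na unfolding nonarch_abs_def by blast
lemma abv_add: "abv (x + y) \<le> max (abv x) (abv y)" using na unfolding nonarch_abs_def by blast
lemma abv_0[simp]: "abv 0 = 0" using abv_eq0 by simp
lemma abv_pos: "x \<noteq> 0 \<Longrightarrow> abv x > 0" using abv_eq0 nn by (metis less_eq_real_def)
lemma abv_1[simp]: "abv 1 = 1"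
proof -
  have "abv 1 * abv 1 = abv 1" using abv_mult[of 1 1] by simp
  moreover have "abv 1 \<noteq> 0" using abv_eq0 by simp
  ultimately show ?thesis by simp
qed
lemma abv_m1: "abv (-1) = 1"
proof -
  have "abv (-1) * abv (-1) = 1" using abv_mult[of "-1" "-1"] by simp
  then show ?thesis using nn[of "-1"] by (metis abs_of_nonneg abs_one real_sqrt_abs real_sqrt_one power2_eq_square)
qed
lemma abv_minus[simp]: "abv (- x) = abv x"
  using abv_mult[of "-1" x] abv_m1 by simp
lemma abv_diff_commute: "abv (x - y) = abv (y - x)"
  by (metis abv_minus minus_diff_eq)
lemma abv_inverse: "abv (inverse x) = inverse (abv x)"
proof (cases "x = 0")
  case False
  then have "abv x * abv (inverse x) = 1" using abv_mult[of x "inverse x"] by simp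
  from inverse_unique[OF this] show ?thesis by simp
qed simp
lemma abv_divide: "abv (x / y) = abv x / abv y"
  by (simp add: divide_inverse abv_mult abv_inverse)
lemma abv_power: "abv (x ^ n) = abv x ^ n"
  by (induction n) (simp_all add: abv_mult)
lemma abv_add_less: "abv x < B \<Longrightarrow> abv y < B \<Longrightarrow> abv (x + y) < B"
  using abv_add[of x y] by simp
lemma abv_add_dom: assumes "abv y < abv x" shows "abv (x + y) = abv x"
proof -
  have "abv (x + y) \<le> abv x" using abv_add[of x y] assms by simp
  moreover have "abv x \<le> max (abv (x + y)) (abv (-y))" using abv_add[of "x + y" "-y"] by simp
  ultimately show ?thesis using assms by (simp add: max_def split: if_splits)
qed
lemma abv_sum_le:
  assumes "finite A" "0 \<le> B" "\<And>i. i \<in> A \<Longrightarrow> abv (f i) \<le> B"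
  shows "abv (sum f A) \<le> B"
  using assms by (induction A rule: finite_induct) (auto intro: order.trans[OF abv_add])
lemma abv_sum_less:
  assumes "finite A" "0 < B" "\<And>i. i \<in> A \<Longrightarrow> abv (f i) < B"
  shows "abv (sum f A) < B"
  using assms by (induction A rule: finite_induct) (auto intro: abv_add_less)

lemma poly_small:
  assumes "degree p \<le> n" "\<And>i. i \<le> n \<Longrightarrow> abv (coeff p i) < e" "e > 0"
  shows "abv (poly p x) < e * max 1 (abv x) ^ n"
proof -
  let ?M = "max 1 (abv x) ^ n"
  have M: "?M \<ge> 1" by simp
  have "abv (\<Sum>i\<le>n. coeff p i * x ^ i) < e * ?M"
  proof (rule abv_sum_less)
    fix i assume i: "i \<in> {..n}"
    have "abv x ^ i \<le> max 1 (abv x) ^ i" by (simp add: nn power_mono)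
    also have "\<dots> \<le> ?M" using i by (intro power_increasing) auto
    finally have xi: "abv x ^ i \<le> ?M" .
    have "abv (coeff p i * x ^ i) = abv (coeff p i) * abv x ^ i" by (simp add: abv_mult abv_power)
    also have "\<dots> \<le> abv (coeff p i) * ?M" using xi nn by (simp add: mult_left_mono)
    also have "\<dots> < e * ?M" using assms(2) i M by simp
    finally show "abv (coeff p i * x ^ i) < e * ?M" .
  qed (use assms M in auto)
  then show ?thesis using poly_sum_le[OF assms(1)] by simp
qed

lemma poly_upper:
  assumes "degree p \<le> n"
  shows "\<exists>M>0. \<forall>x. abv (poly p x) \<le> M * max 1 (abv x) ^ n"
proof -
  define M where "M = 1 + (\<Sum>i\<le>n. abv (coeff p i))"
  have M0: "M > 0" unfolding M_def using nn by (simp add: sum_nonneg add_pos_nonneg)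
  have "abv (poly p x) < M * max 1 (abv x) ^ n" for x
  proof (rule poly_small[OF assms _ M0])
    fix i assume "i \<le> n"
    then have "abv (coeff p i) \<le> (\<Sum>i\<le>n. abv (coeff p i))"
      by (intro member_le_sum) (auto simp: nn)
    then show "abv (coeff p i) < M" unfolding M_def by simp
  qed
  then show ?thesis using M0 less_imp_le by blast
qed

lemma dominant:
  assumes dP: "degree P = d" and d1: "d \<ge> 1"
  shows "\<exists>T\<ge>1. \<forall>x. abv x \<ge> T \<longrightarrow> abv (poly P x) = abv (lead_coeff P) * abv x ^ d"
proof -
  define a where "a = lead_coeff P"
  have "P \<noteq> 0" using dP d1 by auto
  then have a0: "abv a > 0" unfolding a_def by (intro abv_pos) simp
  define MR where "MR = 1 + (\<Sum>i<d. abv (coeff P i))"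
  have MR0: "MR > 0" unfolding MR_def using nn by (simp add: sum_nonneg add_pos_nonneg)
  define T where "T = 1 + MR / abv a"
  have T1: "T \<ge> 1" unfolding T_def using MR0 a0 by simp
  have "abv (poly P x) = abv a * abv x ^ d" if xT: "abv x \<ge> T" for x
  proof -
    have x1: "abv x \<ge> 1" using xT T1 by simp
    have "MR < abv a * abv x"
    proof -
      have "MR / abv a < abv x" using xT unfolding T_def by simp
      then show ?thesis using a0 by (simp add: field_simps)
    qed
    have psum: "poly P x = (\<Sum>i<d. coeff P i * x ^ i) + a * x ^ d"
    proof -
      have "poly P x = (\<Sum>i\<le>d. coeff P i * x ^ i)" using poly_sum_le[of P d x] dP by simp
      also have "{..d} = insert d {..<d}" by auto
      finally show ?thesis unfolding a_def using dP by (simp add: add.commute)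
    qed
    have small: "abv (\<Sum>i<d. coeff P i * x ^ i) < abv a * abv x ^ d"
    proof (rule abv_sum_less)
      fix i assume i: "i \<in> {..<d}"
      have ci: "abv (coeff P i) < MR"
      proof -
        have "abv (coeff P i) \<le> (\<Sum>i<d. abv (coeff P i))"
          using i by (intro member_le_sum) (auto simp: nn)
        then show ?thesis unfolding MR_def by simp
      qed
      have xi: "abv x ^ i \<le> abv x ^ (d - 1)" using i x1 by (intro power_increasing) auto
      have "abv (coeff P i * x ^ i) = abv (coeff P i) * abv x ^ i" by (simp add: abv_mult abv_power)
      also have "\<dots> \<le> MR * abv x ^ (d - 1)"
        using ci xi nn MR0 by (intro mult_mono) (auto simp: less_imp_le)
      also have "\<dots> < (abv a * abv x) * abv x ^ (d - 1)"
        using \<open>MR < abv a * abv x\<close> x1 by (intro mult_strict_right_mono) auto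
      also have "\<dots> = abv a * abv x ^ d" using d1
        by (metis (no_types, lifting) Suc_diff_1 less_le_trans mult.assoc power_Suc zero_less_one)
      finally show "abv (coeff P i * x ^ i) < abv a * abv x ^ d" .
    qed (use a0 x1 in auto)
    have "abv (a * x ^ d) = abv a * abv x ^ d" by (simp add: abv_mult abv_power)
    then show ?thesis using psum small abv_add_dom[of "\<Sum>i<d. coeff P i * x ^ i" "a * x ^ d"]
      by (simp add: add.commute)
  qed
  then show ?thesis using T1 unfolding a_def by blast
qed

lemma coprime_lower:
  fixes F G :: "'a poly"
  assumes cop: "coprime F G" and dd: "d = max (degree F) (degree G)" and d1: "d \<ge> 1"
  shows "\<exists>c>0. \<forall>x. c * max 1 (abv x) ^ d \<le> max (abv (poly F x)) (abv (poly G x))"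
proof -
  obtain A B where AB: "A * F + B * G = 1" using bezout_poly[OF cop] by blast
  define k where "k = max (degree A) (degree B)"
  obtain MA where MA: "MA > 0" "\<And>x. abv (poly A x) \<le> MA * max 1 (abv x) ^ k"
    using poly_upper[of A k] unfolding k_def by auto
  obtain MB where MB: "MB > 0" "\<And>x. abv (poly B x) \<le> MB * max 1 (abv x) ^ k"
    using poly_upper[of B k] unfolding k_def by auto
  define M where "M = max MA MB"
  have M0: "M > 0" using MA unfolding M_def by simp
  have bez: "1 \<le> M * max 1 (abv x) ^ k * max (abv (poly F x)) (abv (poly G x))" for x
  proof -
    let ?m = "max 1 (abv x) ^ k" and ?mx = "max (abv (poly F x)) (abv (poly G x))"
    have "poly A x * poly F x + poly B x * poly G x = 1"
      using arg_cong[OF AB, of "\<lambda>p. poly p x"] by simp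
    then have "1 \<le> max (abv (poly A x) * abv (poly F x)) (abv (poly B x) * abv (poly G x))"
      using abv_add[of "poly A x * poly F x" "poly B x * poly G x"] by (simp add: abv_mult)
    also have "\<dots> \<le> M * ?m * ?mx"
    proof (rule max.boundedI)
      have "abv (poly A x) * abv (poly F x) \<le> (MA * ?m) * ?mx"
        using MA(2)[of x] nn MA(1) by (intro mult_mono) auto
      also have "\<dots> \<le> M * ?m * ?mx" unfolding M_def using nn
        by (intro mult_right_mono) (auto simp: max_def)
      finally show "abv (poly A x) * abv (poly F x) \<le> M * ?m * ?mx" .
      have "abv (poly B x) * abv (poly G x) \<le> (MB * ?m) * ?mx"
        using MB(2)[of x] nn MB(1) by (intro mult_mono) auto
      also have "\<dots> \<le> M * ?m * ?mx" unfolding M_def using nn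
        by (intro mult_right_mono) (auto simp: max_def)
      finally show "abv (poly B x) * abv (poly G x) \<le> M * ?m * ?mx" .
    qed
    finally show ?thesis .
  qed
  obtain P where PFG: "P = F \<or> P = G" and dP: "degree P = d" using dd by (cases "degree F \<le> degree G") (auto simp: max_def)
  obtain T where T1: "T \<ge> 1" and T: "\<And>x. abv x \<ge> T \<Longrightarrow> abv (poly P x) = abv (lead_coeff P) * abv x ^ d"
    using dominant[OF dP d1] by blast
  have "P \<noteq> 0" using dP d1 by auto
  then have a0: "abv (lead_coeff P) > 0" by (intro abv_pos) simp
  define c where "c = min (abv (lead_coeff P)) (1 / (M * T ^ (k + d)))"
  have c0: "c > 0" unfolding c_def using a0 M0 T1 by simp
  have "c * max 1 (abv x) ^ d \<le> max (abv (poly F x)) (abv (poly G x))" for x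
  proof (cases "abv x \<ge> T")
    case True
    then have m: "max 1 (abv x) = abv x" using T1 by simp
    have "c * max 1 (abv x) ^ d \<le> abv (lead_coeff P) * abv x ^ d"
      unfolding m c_def using nn by (intro mult_right_mono) auto
    also have "\<dots> = abv (poly P x)" using T[OF True] by simp
    also have "\<dots> \<le> max (abv (poly F x)) (abv (poly G x))" using PFG by auto
    finally show ?thesis .
  next
    case False
    let ?m1 = "max 1 (abv x)" and ?mx = "max (abv (poly F x)) (abv (poly G x))"
    have m1T: "?m1 \<le> T" using False T1 by simp
    have mk: "?m1 ^ k \<le> T ^ k" and md: "?m1 ^ d \<le> T ^ d" using m1T by (auto intro: power_mono)
    have mx0: "?mx \<ge> 0" using nn by (simp add: le_max_iff_disj)
    have "1 \<le> M * ?m1 ^ k * ?mx" by (rule bez)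
    also have "\<dots> \<le> M * T ^ k * ?mx" using mk M0 mx0 by (intro mult_right_mono) auto
    finally have one: "1 \<le> M * T ^ k * ?mx" .
    have "c * ?m1 ^ d \<le> (1 / (M * T ^ (k + d))) * T ^ d"
      unfolding c_def using M0 T1 by (intro mult_mono md) (auto intro!: mult_nonneg_nonneg less_imp_le)
    also have "\<dots> = 1 / (M * T ^ k)" using T1 M0 by (simp add: power_add field_simps)
    also have "\<dots> \<le> ?mx" using one M0 T1 by (simp add: field_simps)
    finally show ?thesis .
  qed
  then show ?thesis using c0 by blast
qed

lemma perturb:
  fixes F G Fp Gp :: "'a poly"
  assumes low: "\<And>x. c * max 1 (abv x) ^ d \<le> max (abv (poly F x)) (abv (poly G x))"
    and gt: "\<And>x. abv x > 1 \<Longrightarrow> abv (poly G x) < abv (poly F x)"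
    and dF: "degree F \<le> d" and dG: "degree G \<le> d" and dF2: "degree Fp \<le> d" and dG2: "degree Gp \<le> d"
    and cF: "\<And>i. i \<le> d \<Longrightarrow> abv (coeff Fp i - coeff F i) < e"
    and cG: "\<And>i. i \<le> d \<Longrightarrow> abv (coeff Gp i - coeff G i) < e"
    and e0: "e > 0" and ec: "e \<le> c"
  shows "\<And>x. abv x > 1 \<Longrightarrow> abv (poly Gp x) < abv (poly Fp x)"
    and "\<And>x. abv x \<le> 1 \<Longrightarrow> abv (poly F x) \<le> abv (poly G x) \<Longrightarrow>
          poly Gp x \<noteq> 0 \<and> abv (poly Fp x / poly Gp x - poly F x / poly G x) < e / c"
proof -
  define DF where "DF = Fp - F"
  define DG where "DG = Gp - G"
  have dDF: "degree DF \<le> d" unfolding DF_def using dF dF2 degree_diff_le by blast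
  have dDG: "degree DG \<le> d" unfolding DG_def using dG dG2 degree_diff_le by blast
  have sF: "abv (poly DF x) < e * max 1 (abv x) ^ d" for x
    by (rule poly_small[OF dDF _ e0]) (simp add: DF_def cF)
  have sG: "abv (poly DG x) < e * max 1 (abv x) ^ d" for x
    by (rule poly_small[OF dDG _ e0]) (simp add: DG_def cG)
  have Fp: "poly Fp x = poly F x + poly DF x" for x unfolding DF_def by simp
  have Gp: "poly Gp x = poly G x + poly DG x" for x unfolding DG_def by simp
  show "abv (poly Gp x) < abv (poly Fp x)" if x1: "abv x > 1" for x
  proof -
    have m: "max 1 (abv x) = abv x" using x1 by simp
    have Fb: "e * abv x ^ d \<le> abv (poly F x)"
    proof -
      have "e * abv x ^ d \<le> c * abv x ^ d" using ec x1 by (intro mult_right_mono) auto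
      also have "\<dots> \<le> abv (poly F x)" using low[of x] gt[OF x1] m by simp
      finally show ?thesis .
    qed
    have eqF: "abv (poly Fp x) = abv (poly F x)"
      unfolding Fp using sF[of x] Fb m by (intro abv_add_dom) simp
    have "abv (poly Gp x) < abv (poly F x)"
      unfolding Gp using sG[of x] Fb m gt[OF x1] by (intro abv_add_less) simp_all
    then show ?thesis using eqF by simp
  qed
  show "poly Gp x \<noteq> 0 \<and> abv (poly Fp x / poly Gp x - poly F x / poly G x) < e / c"
    if x1: "abv x \<le> 1" and FG: "abv (poly F x) \<le> abv (poly G x)" for x
  proof -
    have m: "max 1 (abv x) = 1" using x1 by simp
    have Gc: "c \<le> abv (poly G x)" using low[of x] FG m by simp
    have c0: "c > 0" using e0 ec by simp
    have Gpos: "abv (poly G x) > 0" using Gc c0 by simp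
    have dG: "abv (poly DG x) < abv (poly G x)" using sG[of x] m ec Gc by simp
    have dF': "abv (poly DF x) < e" using sF[of x] m by simp
    have dG': "abv (poly DG x) < e" using sG[of x] m by simp
    have eqG: "abv (poly Gp x) = abv (poly G x)" unfolding Gp using dG by (rule abv_add_dom)
    then have G2nz: "poly Gp x \<noteq> 0" using Gpos abv_eq0 by force
    have Gnz: "poly G x \<noteq> 0" using Gpos abv_eq0 by force
    have diff: "poly Fp x / poly Gp x - poly F x / poly G x =
        (poly DF x * poly G x - poly F x * poly DG x) / (poly Gp x * poly G x)"
      using G2nz Gnz unfolding Fp Gp by (simp add: field_simps)
    have num: "abv (poly DF x * poly G x - poly F x * poly DG x) < e * abv (poly G x)"
    proof -
      have "abv (poly DF x * poly G x) < e * abv (poly G x)"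
        using dF' Gpos by (simp add: abv_mult)
      moreover have "abv (- (poly F x * poly DG x)) < e * abv (poly G x)"
      proof -
        have "abv (- (poly F x * poly DG x)) = abv (poly F x) * abv (poly DG x)" by (simp add: abv_mult)
        also have "\<dots> \<le> abv (poly G x) * abv (poly DG x)" using FG nn by (intro mult_right_mono) auto
        also have "\<dots> < abv (poly G x) * e" using dG' Gpos by simp
        finally show ?thesis by (simp add: mult.commute)
      qed
      ultimately show ?thesis using abv_add_less by (metis diff_conv_add_uminus)
    qed
    have "abv (poly Fp x / poly Gp x - poly F x / poly G x) =
        abv (poly DF x * poly G x - poly F x * poly DG x) / (abv (poly G x) * abv (poly G x))"
      unfolding diff abv_divide abv_mult eqG ..
    also have "\<dots> < e * abv (poly G x) / (abv (poly G x) * abv (poly G x))"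
      using num Gpos by (intro divide_strict_right_mono) auto
    also have "\<dots> = e / abv (poly G x)" using Gpos by simp
    also have "\<dots> \<le> e / c" using Gc c0 e0 by (intro divide_left_mono) auto
    finally show ?thesis using G2nz by simp
  qed
qed

end

lemma Cv_nonneg:
  fixes abv :: "'a::field_char_0 \<Rightarrow> real"
  assumes "Cv_field abv"
  shows "abv x \<ge> 0"
proof -
  have ac: "alg_closed_field TYPE('a)" and na: "nonarch_abs abv" using assms unfolding Cv_field_def by auto
  have "0 < degree [:-x, 0, 1:]" by simp
  then have "\<exists>y. poly [:-x, 0, 1:] y = 0" using ac unfolding alg_closed_field_def by blast
  then obtain y where "poly [:-x, 0, 1:] y = 0" by blast
  then have "x = y * y" by (simp add: algebra_simps)
  then have "abv x = abv y * abv y" using na unfolding nonarch_abs_def by simp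
  then show ?thesis by simp
qed

theorem lemma5p6:
  fixes abv :: "'a::field_char_0 \<Rightarrow> real" and F G :: "'a poly" and d :: nat
  assumes "Cv_field abv"
    and "is_ratd d (F, G)" and "d \<ge> 2"
    and "\<forall>x. abv x > 1 \<longrightarrow> rat_abs_gt1 abv (F, G) x"
  shows "\<forall>\<gamma>>0. \<exists>W. ratd_open abv d W \<and> (F, G) \<in> W \<and>
           (\<forall>F' G'. (F', G') \<in> W \<longrightarrow>
              (\<forall>x. abv x > 1 \<longrightarrow> rat_abs_gt1 abv (F', G') x) \<and>
              (\<forall>x. poly G x \<noteq> 0 \<and> abv (poly F x / poly G x) \<le> 1 \<longrightarrow>
                   poly G' x \<noteq> 0 \<and>
                   abv (poly F' x / poly G' x - poly F x / poly G x) < \<gamma>))"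
proof (intro allI impI)
  fix \<gamma> :: real assume g0: "\<gamma> > 0"
  interpret nabs abv
    using assms(1) Cv_nonneg[OF assms(1)] by unfold_locales (auto simp: Cv_field_def)
  have cop: "coprime F G" and dd: "d = max (degree F) (degree G)"
    using assms(2) unfolding is_ratd_def by auto
  have dF: "degree F \<le> d" and dG: "degree G \<le> d" using dd by auto
  obtain c where c0: "c > 0" and low: "\<And>x. c * max 1 (abv x) ^ d \<le> max (abv (poly F x)) (abv (poly G x))"
    using coprime_lower[OF cop dd] assms(3) by auto
  have gt: "abv (poly G x) < abv (poly F x)" if x1: "abv x > 1" for x
  proof (cases "poly G x = 0")
    case True
    have "0 < c * max 1 (abv x) ^ d" using c0 by simp
    also have "\<dots> \<le> abv (poly F x)" using low[of x] True by (simp add: max_absorb1 nn)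
    finally show ?thesis using True by simp
  next
    case False
    then have "abv (poly F x / poly G x) > 1" using assms(4) x1 unfolding rat_abs_gt1_def by auto
    moreover have "abv (poly G x) > 0" using False by (rule abv_pos)
    ultimately show ?thesis by (simp add: abv_divide field_simps)
  qed
  define e where "e = c * min 1 (\<gamma> / 2)"
  have e0: "e > 0" unfolding e_def using c0 g0 by simp
  have ec: "e \<le> c" unfolding e_def using c0 by (simp add: mult_le_cancel_left1 min_le_iff_disj)
  have eg: "e / c < \<gamma>" unfolding e_def using c0 g0 by (simp add: min_def)
  define close where "close = (\<lambda>P Q. \<forall>i\<le>d. abv (coeff P i - coeff F i) < e \<and> abv (coeff Q i - coeff G i) < e)"
  define W where "W = {(P, Q). is_ratd d (P, Q) \<and> (\<exists>k. k \<noteq> 0 \<and> close (smult k P) (smult k Q))}"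
  have memW: "(P, Q) \<in> W \<longleftrightarrow> is_ratd d (P, Q) \<and> (\<exists>k. k \<noteq> 0 \<and> close (smult k P) (smult k Q))" for P Q
    unfolding W_def by simp
  have "ratd_open abv d W"
    unfolding ratd_open_def
  proof (intro conjI allI impI)
    show "W \<subseteq> {FG. is_ratd d FG}" unfolding W_def by auto
  next
    fix P Q c' assume h: "(P, Q) \<in> W \<and> c' \<noteq> (0::'a)"
    then obtain k where k: "k \<noteq> 0" "close (smult k P) (smult k Q)" and r: "is_ratd d (P, Q)"
      unfolding memW by blast
    have "smult (k / c') (smult c' P) = smult k P" "smult (k / c') (smult c' Q) = smult k Q"
      using h by simp_all
    then show "(smult c' P, smult c' Q) \<in> W" unfolding memW
      using is_ratd_smult[OF r] h k by (metis divide_eq_0_iff)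
  next
    fix P Q assume "(P, Q) \<in> W"
    then obtain k where k: "k \<noteq> 0" "close (smult k P) (smult k Q)" unfolding memW by blast
    define D where "D = (\<lambda>i. max (abv (k * coeff P i - coeff F i)) (abv (k * coeff Q i - coeff G i)))"
    define \<delta> where "\<delta> = Max (insert 0 (D ` {..d}))"
    have Di: "D i \<le> \<delta>" if "i \<le> d" for i unfolding \<delta>_def using that by (intro Max_ge) auto
    have \<delta>e: "\<delta> < e" unfolding \<delta>_def using k(2) e0 by (auto simp: close_def D_def)
    have \<delta>0: "\<delta> \<ge> 0" unfolding \<delta>_def by (intro Max_ge) auto
    have kp: "abv k > 0" using k(1) by (rule abv_pos)
    define e' where "e' = (e - \<delta>) / abv k"
    have e'0: "e' > 0" unfolding e'_def using \<delta>e kp by simp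
    show "\<exists>e>0. \<forall>F' G'. is_ratd d (F', G') \<and> (\<forall>i\<le>d. abv (coeff F' i - coeff P i) < e \<and> abv (coeff G' i - coeff Q i) < e) \<longrightarrow> (F', G') \<in> W"
    proof (intro exI[of _ e'] conjI allI impI e'0)
      fix P' Q' assume h: "is_ratd d (P', Q') \<and> (\<forall>i\<le>d. abv (coeff P' i - coeff P i) < e' \<and> abv (coeff Q' i - coeff Q i) < e')"
      have key: "abv (k * coeff X' i - coeff Y i) < e"
        if "abv (coeff X' i - coeff X i) < e'" "abv (k * coeff X i - coeff Y i) \<le> \<delta>" for X' X Y :: "'a poly" and i
      proof -
        have eq: "k * coeff X' i - coeff Y i = k * (coeff X' i - coeff X i) + (k * coeff X i - coeff Y i)"
          by (simp add: algebra_simps)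
        have "abv (k * (coeff X' i - coeff X i)) < abv k * e'" using that(1) kp by (simp add: abv_mult)
        also have "\<dots> = e - \<delta>" unfolding e'_def using kp by simp
        also have "\<dots> \<le> e" using \<delta>0 by simp
        finally have "abv (k * (coeff X' i - coeff X i)) < e" .
        moreover have "abv (k * coeff X i - coeff Y i) < e" using that(2) \<delta>e by simp
        ultimately show ?thesis unfolding eq by (rule abv_add_less)
      qed
      have "close (smult k P') (smult k Q')" unfolding close_def
      proof (intro allI impI conjI)
        fix i assume i: "i \<le> d"
        show "abv (coeff (smult k P') i - coeff F i) < e"
          using key[of P' i P F] h i Di[OF i] by (simp add: D_def)
        show "abv (coeff (smult k Q') i - coeff G i) < e"
          using key[of Q' i Q G] h i Di[OF i] by (simp add: D_def)
      qed
      then show "(P', Q') \<in> W" unfolding memW using h k(1) by blast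
    qed
  qed
  moreover have "(F, G) \<in> W" unfolding memW close_def using assms(2) e0
    by (intro conjI exI[of _ 1]) auto
  moreover have "(\<forall>x. abv x > 1 \<longrightarrow> rat_abs_gt1 abv (P, Q) x) \<and>
              (\<forall>x. poly G x \<noteq> 0 \<and> abv (poly F x / poly G x) \<le> 1 \<longrightarrow>
                   poly Q x \<noteq> 0 \<and>
                   abv (poly P x / poly Q x - poly F x / poly G x) < \<gamma>)" if PQ: "(P, Q) \<in> W" for P Q
  proof -
    obtain k where k: "k \<noteq> 0" "close (smult k P) (smult k Q)" and r: "is_ratd d (P, Q)"
      using PQ unfolding memW by blast
    have dP: "degree (smult k P) \<le> d" and dQ: "degree (smult k Q) \<le> d" using r unfolding is_ratd_def by auto
    have cl1: "\<And>i. i \<le> d \<Longrightarrow> abv (coeff (smult k P) i - coeff F i) < e"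
      and cl2: "\<And>i. i \<le> d \<Longrightarrow> abv (coeff (smult k Q) i - coeff G i) < e"
      using k(2) unfolding close_def by auto
    have pa: "\<And>x. abv x > 1 \<Longrightarrow> abv (poly (smult k Q) x) < abv (poly (smult k P) x)"
      by (rule perturb(1)[where c=c and d=d and e=e and F=F and G=G and Fp="smult k P" and Gp="smult k Q"])
        (use low gt dF dG dP dQ cl1 cl2 e0 ec in auto)
    have pb: "\<And>x. abv x \<le> 1 \<Longrightarrow> abv (poly F x) \<le> abv (poly G x) \<Longrightarrow>
          poly (smult k Q) x \<noteq> 0 \<and> abv (poly (smult k P) x / poly (smult k Q) x - poly F x / poly G x) < e / c"
      by (rule perturb(2)[where c=c and d=d and e=e and F=F and G=G and Fp="smult k P" and Gp="smult k Q"])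
        (use low gt dF dG dP dQ cl1 cl2 e0 ec in auto)
    have kp: "abv k > 0" using k(1) by (rule abv_pos)
    have ratio: "poly (smult k P) x / poly (smult k Q) x = poly P x / poly Q x" for x
      using k(1) by simp
    show ?thesis
    proof (intro conjI allI impI)
      fix x assume x1: "abv x > 1"
      show "rat_abs_gt1 abv (P, Q) x"
      proof (cases "poly Q x = 0")
        case False
        have "abv (poly (smult k Q) x) < abv (poly (smult k P) x)" by (rule pa[OF x1])
        then have "abv (poly Q x) < abv (poly P x)" using kp by (simp add: abv_mult)
        moreover have "abv (poly Q x) > 0" using False by (rule abv_pos)
        ultimately have "abv (poly P x / poly Q x) > 1" by (simp add: abv_divide field_simps)
        then show ?thesis unfolding rat_abs_gt1_def by simp
      qed (simp add: rat_abs_gt1_def)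
    next
      fix x assume h: "poly G x \<noteq> 0 \<and> abv (poly F x / poly G x) \<le> 1"
      have x1: "abv x \<le> 1"
      proof (rule ccontr)
        assume "\<not> abv x \<le> 1"
        then have "rat_abs_gt1 abv (F, G) x" using assms(4) by simp
        then show False using h unfolding rat_abs_gt1_def by simp
      qed
      have Gp: "abv (poly G x) > 0" using h abv_pos by blast
      have FG: "abv (poly F x) \<le> abv (poly G x)" using h Gp by (simp add: abv_divide field_simps)
      from pb[OF x1 FG] have "poly (smult k Q) x \<noteq> 0"
        and lt: "abv (poly (smult k P) x / poly (smult k Q) x - poly F x / poly G x) < e / c" by auto
      then show "poly Q x \<noteq> 0" by simp
      show "abv (poly P x / poly Q x - poly F x / poly G x) < \<gamma>" using lt eg ratio by simp
    qed
  qed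
  ultimately show "\<exists>W. ratd_open abv d W \<and> (F, G) \<in> W \<and>
           (\<forall>F' G'. (F', G') \<in> W \<longrightarrow>
              (\<forall>x. abv x > 1 \<longrightarrow> rat_abs_gt1 abv (F', G') x) \<and>
              (\<forall>x. poly G x \<noteq> 0 \<and> abv (poly F x / poly G x) \<le> 1 \<longrightarrow>
                   poly G' x \<noteq> 0 \<and>
                   abv (poly F' x / poly G' x - poly F x / poly G x) < \<gamma>))" by blast
qed

end
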